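(* There exists a $10$-ary $3$-frameproof code of length $5$ and cardinality $135$ satisfying Property $P(2)$.
   Context: For $P\subseteq F^l$ over a finite alphabet $F$, $desc(P)=\{x\in F^l: \text{for every } i \text{ there is } y\in P \text{ with } x_i=y_i\}$. For an integer $c\geq 2$, a $c$-frameproof code is a subset $C\subseteq F^l$ with $desc(P)\cap C=P$ for every $P\subseteq C$ with $|P|\leq c$; it is $q$-ary if $|F|=q$. A $c$-frameproof code $C$ over an alphabet $S$ satisfies Property $P(t)$ if there is a special element $\infty\in S$ such that every codeword has at most $t-1$ coordinates equal to $\infty$ and any two codewords that agree in $t$ coordinates where their common value is not $\infty$ are equal. *)

theory Defs
  imports Main
begin

definition words :: "'a set \<Rightarrow> nat \<Rightarrow> 'a list set" where
  "words F l = {x. length x = l \<and> set x \<subseteq> F}"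

definition desc :: "'a set \<Rightarrow> nat \<Rightarrow> 'a list set \<Rightarrow> 'a list set" where
  "desc F l P = {x \<in> words F l. \<forall>i<l. \<exists>y\<in>P. x ! i = y ! i}"

definition frameproof :: "nat \<Rightarrow> 'a set \<Rightarrow> nat \<Rightarrow> 'a list set \<Rightarrow> bool" where
  "frameproof c F l C \<longleftrightarrow> C \<subseteq> words F l \<and>
     (\<forall>P. P \<subseteq> C \<and> finite P \<and> card P \<le> c \<longrightarrow> desc F l P \<inter> C = P)"

definition propertyP :: "nat \<Rightarrow> 'a set \<Rightarrow> nat \<Rightarrow> 'a list set \<Rightarrow> bool" where
  "propertyP t S l C \<longleftrightarrow> (\<exists>inf\<in>S.
     (\<forall>x\<in>C. card {i. i < l \<and> x ! i = inf} \<le> t - 1) \<and>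
     (\<forall>x\<in>C. \<forall>y\<in>C. (\<exists>T. T \<subseteq> {..<l} \<and> card T = t \<and>
          (\<forall>i\<in>T. x ! i = y ! i \<and> x ! i \<noteq> inf)) \<longrightarrow> x = y))"

end

theory Submission
  imports Defs
begin

definition LL :: "nat list list" where "LL = [
  [9,8,1,8,8],
  [9,2,1,4,1],
  [9,5,1,0,3],
  [9,8,4,2,2],
  [9,2,4,7,4],
  [9,5,4,3,6],
  [9,8,7,5,5],
  [9,2,7,1,7],
  [9,5,7,6,0],
  [9,6,2,6,6],
  [9,0,2,5,2],
  [9,3,2,1,4],
  [9,6,5,0,0],
  [9,0,5,8,5],
  [9,3,5,4,7],
  [9,6,8,3,3],
  [9,0,8,2,8],
  [9,3,8,7,1],
  [9,7,0,7,7],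
  [9,1,0,3,0],
  [9,4,0,2,5],
  [9,7,3,1,1],
  [9,1,3,6,3],
  [9,4,3,5,8],
  [9,7,6,4,4],
  [9,1,6,0,6],
  [9,4,6,8,2],
  [4,9,1,3,7],
  [7,9,1,2,0],
  [1,9,1,7,5],
  [5,9,4,6,1],
  [8,9,4,5,3],
  [2,9,4,1,8],
  [3,9,7,0,4],
  [6,9,7,8,6],
  [0,9,7,4,2],
  [4,9,2,4,8],
  [7,9,2,0,1],
  [1,9,2,8,3],
  [5,9,5,7,2],
  [8,9,5,3,4],
  [2,9,5,2,6],
  [3,9,8,1,5],
  [6,9,8,6,7],
  [0,9,8,5,0],
  [4,9,0,5,6],
  [7,9,0,1,2],
  [1,9,0,6,4],
  [5,9,3,8,0],
  [8,9,3,4,5],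
  [2,9,3,0,7],
  [3,9,6,2,3],
  [6,9,6,7,8],
  [0,9,6,3,1],
  [2,8,9,7,0],
  [5,2,9,3,5],
  [8,5,9,2,7],
  [0,8,9,1,3],
  [3,2,9,6,8],
  [6,5,9,5,1],
  [1,8,9,4,6],
  [4,2,9,0,2],
  [7,5,9,8,4],
  [2,6,9,8,1],
  [5,0,9,4,3],
  [8,3,9,0,8],
  [0,6,9,2,4],
  [3,0,9,7,6],
  [6,3,9,3,2],
  [1,6,9,5,7],
  [4,0,9,1,0],
  [7,3,9,6,5],
  [2,7,9,6,2],
  [5,1,9,5,4],
  [8,4,9,1,6],
  [0,7,9,0,5],
  [3,1,9,8,7],
  [6,4,9,4,0],
  [1,7,9,3,8],
  [4,1,9,2,1],
  [7,4,9,7,3],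
  [8,0,0,9,1],
  [2,3,0,9,3],
  [5,6,0,9,8],
  [6,0,3,9,4],
  [0,3,3,9,6],
  [3,6,3,9,2],
  [7,0,6,9,7],
  [1,3,6,9,0],
  [4,6,6,9,5],
  [8,1,1,9,2],
  [2,4,1,9,4],
  [5,7,1,9,6],
  [6,1,4,9,5],
  [0,4,4,9,7],
  [3,7,4,9,0],
  [7,1,7,9,8],
  [1,4,7,9,1],
  [4,7,7,9,3],
  [8,2,2,9,0],
  [2,5,2,9,5],
  [5,8,2,9,7],
  [6,2,5,9,3],
  [0,5,5,9,8],
  [3,8,5,9,1],
  [7,2,8,9,6],
  [1,5,8,9,2],
  [4,8,8,9,4],
  [3,3,1,5,9],
  [6,6,1,1,9],
  [0,0,1,6,9],
  [4,3,4,8,9],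
  [7,6,4,4,9],
  [1,0,4,0,9],
  [5,3,7,2,9],
  [8,6,7,7,9],
  [2,0,7,3,9],
  [3,4,2,3,9],
  [6,7,2,2,9],
  [0,1,2,7,9],
  [4,4,5,6,9],
  [7,7,5,5,9],
  [1,1,5,1,9],
  [5,4,8,0,9],
  [8,7,8,8,9],
  [2,1,8,4,9],
  [3,5,0,4,9],
  [6,8,0,0,9],
  [0,2,0,8,9],
  [4,5,3,7,9],
  [7,8,3,3,9],
  [1,2,3,2,9],
  [5,5,6,1,9],
  [8,8,6,6,9],
  [2,2,6,5,9]]"

lemma LL_distinct: "distinct LL" unfolding LL_def by code_simp

lemma LL_agree: "list_all (\<lambda>x. list_all (\<lambda>y. x = y \<or> length (filter (\<lambda>i. x!i = y!i \<and> x!i \<noteq> 9) [0..<5]) \<le> 1) LL) LL"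
  unfolding LL_def by code_simp

lemma LL_words: "list_all (\<lambda>x. length x = 5 \<and> list_all (\<lambda>a. a \<le> 9) x \<and> length (filter (\<lambda>i. x!i = 9) [0..<5]) \<le> 1) LL"
  unfolding LL_def by code_simp

lemma LL_len: "length LL = 135" unfolding LL_def by simp

lemma cnt: "length (filter P [0..<n]) = card {i. i < n \<and> P i}"
proof -
  have "length (filter P [0..<n]) = card ({x. P x} \<inter> set [0..<n])"
    by (rule distinct_length_filter) simp
  also have "{x. P x} \<inter> set [0..<n] = {i. i < n \<and> P i}" by auto
  finally show ?thesis .
qed

lemma words_ok: "x \<in> set LL \<Longrightarrow> x \<in> words {0..9::nat} 5"
  using LL_words unfolding words_def list_all_iff by auto

lemma inf_ok: "x \<in> set LL \<Longrightarrow> card {i. i < 5 \<and> x ! i = (9::nat)} \<le> 1"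
  using LL_words unfolding list_all_iff cnt by auto

lemma agree_ok:
  assumes "x \<in> set LL" "y \<in> set LL" "T \<subseteq> {..<5}" "card T = 2"
    "\<forall>i\<in>T. x ! i = y ! i \<and> x ! i \<noteq> (9::nat)"
  shows "x = y"
proof (rule ccontr)
  assume ne: "x \<noteq> y"
  have "card {i. i < 5 \<and> (x!i = y!i \<and> x!i \<noteq> 9)} \<le> 1"
    using LL_agree assms(1,2) ne unfolding list_all_iff cnt by auto
  moreover have "T \<subseteq> {i. i < 5 \<and> (x!i = y!i \<and> x!i \<noteq> 9)}" using assms(3,5) by auto
  hence "card T \<le> card {i. i < 5 \<and> (x!i = y!i \<and> x!i \<noteq> 9)}"
    by (intro card_mono) auto
  ultimately show False using assms(4) by simp
qed

lemma fp: "frameproof 3 {0..9::nat} 5 (set LL)"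
  unfolding frameproof_def
proof (intro conjI allI impI)
  show "set LL \<subseteq> words {0..9} 5" using words_ok by auto
  fix P assume H: "P \<subseteq> set LL \<and> finite P \<and> card P \<le> 3"
  show "desc {0..9} 5 P \<inter> set LL = P"
  proof
    show "P \<subseteq> desc {0..9} 5 P \<inter> set LL"
      using H words_ok unfolding desc_def by blast
    show "desc {0..9} 5 P \<inter> set LL \<subseteq> P"
    proof
      fix x assume xd: "x \<in> desc {0..9} 5 P \<inter> set LL"
      show "x \<in> P"
      proof (rule ccontr)
        assume xn: "x \<notin> P"
        define S where "S = {i. i < 5 \<and> x ! i \<noteq> 9}"
        have "\<forall>i<5. \<exists>y\<in>P. x ! i = y ! i" using xd unfolding desc_def by auto
        then obtain g where g: "\<And>i. i < 5 \<Longrightarrow> g i \<in> P \<and> x ! i = g i ! i" by metis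
        have c1: "card {i. i < 5 \<and> x ! i = 9} \<le> 1" using inf_ok xd by auto
        have "S = {..<5} - {i. i < 5 \<and> x ! i = 9}" unfolding S_def by auto
        hence "card S = 5 - card {i. i < 5 \<and> x ! i = 9}"
          by (simp only:, subst card_Diff_subset) auto
        hence cS: "card S \<ge> 4" using c1 by simp
        have "\<not> inj_on g S"
        proof
          assume "inj_on g S"
          moreover have "g ` S \<subseteq> P" using g unfolding S_def by auto
          ultimately have "card S \<le> card P" using H card_inj_on_le by blast
          thus False using cS H by simp
        qed
        then obtain i j where ij: "i \<in> S" "j \<in> S" "i \<noteq> j" "g i = g j"
          unfolding inj_on_def by blast
        have "x = g i"
        proof (rule agree_ok[where T = "{i, j}"])
          show "x \<in> set LL" using xd by auto
          show "g i \<in> set LL" using g H ij S_def by auto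
          show "{i, j} \<subseteq> {..<5}" using ij S_def by auto
          show "card {i, j} = 2" using ij by simp
          show "\<forall>k\<in>{i, j}. x ! k = g i ! k \<and> x ! k \<noteq> 9"
            using ij g S_def by auto
        qed
        moreover have "g i \<in> P" using g ij S_def by auto
        ultimately show False using xn by simp
      qed
    qed
  qed
qed

theorem lemma4:
  shows "\<exists>(F :: nat set) (C :: nat list set). finite F \<and> card F = 10 \<and>
           frameproof 3 F 5 C \<and> finite C \<and> card C = 135 \<and> propertyP 2 F 5 C"
proof (intro exI conjI)
  show "finite {0..9::nat}" by simp
  show "card {0..9::nat} = 10" by simp
  show "frameproof 3 {0..9::nat} 5 (set LL)" by (rule fp)
  show "finite (set LL)" by simp
  show "card (set LL) = 135" using LL_distinct LL_len distinct_card by metis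
  show "propertyP 2 {0..9::nat} 5 (set LL)"
    unfolding propertyP_def
  proof (rule bexI[where x = 9], intro conjI ballI impI)
    fix x assume "x \<in> set LL" thus "card {i. i < 5 \<and> x ! i = 9} \<le> 2 - 1" using inf_ok by simp
  next
    fix x y assume "x \<in> set LL" "y \<in> set LL"
      "\<exists>T\<subseteq>{..<5}. card T = 2 \<and> (\<forall>i\<in>T. x ! i = y ! i \<and> x ! i \<noteq> 9)"
    thus "x = y" using agree_ok by blast
  qed simp
qed

end
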